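(* Let $N\ge2$ be an integer and let $B=(b_{i,j})_{i,j=1}^{N-1}$ be the symmetric Toeplitz matrix with $b_{i,i}=\frac{2N}{3}-1$, $b_{i,j}=\frac N6-1$ if $|i-j|=1$, and $b_{i,j}=-1$ if $|i-j|\ge2$. Let $L_{N-1}=\mathrm{tridiag}(-1,2,-1)$ be the $(N-1)\times(N-1)$ one-dimensional discrete Laplacian. Then $H:=B-\frac N{12}L_{N-1}$ is positive semi-definite. Moreover, $H$ is singular when $N$ is even and positive definite when $N$ is odd. *)

theory Defs
  imports "Jordan_Normal_Form.Determinant"
begin

(* Matrices are Jordan_Normal_Form matrices; rows/columns are indexed 0..n-1
   (the paper's index i corresponds to i-1 here; |i-j| is unchanged). *)

definition Bmat :: "nat \<Rightarrow> real mat" where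
  "Bmat N = mat (N - 1) (N - 1) (\<lambda>(i, j).
      if i = j then 2 * real N / 3 - 1
      else if i + 1 = j \<or> j + 1 = i then real N / 6 - 1
      else -1)"

definition Lap :: "nat \<Rightarrow> real mat" where
  "Lap n = mat n n (\<lambda>(i, j).
      if i = j then 2
      else if i + 1 = j \<or> j + 1 = i then -1
      else 0)"

definition Hmat :: "nat \<Rightarrow> real mat" where
  "Hmat N = Bmat N - (real N / 12) \<cdot>\<^sub>m Lap (N - 1)"

definition psd_mat :: "real mat \<Rightarrow> bool" where
  "psd_mat A \<longleftrightarrow> A \<in> carrier_mat (dim_row A) (dim_row A) \<and>
     (\<forall>v \<in> carrier_vec (dim_row A). v \<bullet> (A *\<^sub>v v) \<ge> 0)"

definition pd_mat :: "real mat \<Rightarrow> bool" where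
  "pd_mat A \<longleftrightarrow> A \<in> carrier_mat (dim_row A) (dim_row A) \<and>
     (\<forall>v \<in> carrier_vec (dim_row A). v \<noteq> 0\<^sub>v (dim_row A) \<longrightarrow> v \<bullet> (A *\<^sub>v v) > 0)"

end

theory Submission imports Defs begin

definition hh :: "real \<Rightarrow> nat \<Rightarrow> nat \<Rightarrow> real" where
  "hh c i j = (if i = j then c/2 - 1 else if i + 1 = j \<or> j + 1 = i then c/4 - 1 else -1)"

definition prv :: "(nat \<Rightarrow> real) \<Rightarrow> nat \<Rightarrow> real" where
  "prv g k = (if k = 0 then 0 else g (k - 1))"

lemma row_sum:
  assumes "i < n" "\<forall>k\<ge>n. g k = 0"
  shows "(\<Sum>j<n. hh c i j * g j) = c/2 * g i + c/4 * prv g i + c/4 * g (i+1) - (\<Sum>j<n. g j)"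
proof -
  have e: "hh c i j * g j = (if i = j then c/2 * g j else 0) + (if i - 1 = j \<and> i > 0 then c/4 * g j else 0)
     + (if i + 1 = j then c/4 * g j else 0) - g j" for j
    unfolding hh_def by (auto simp: algebra_simps)
  have "(\<Sum>j<n. hh c i j * g j) = (\<Sum>j<n. (if i = j then c/2 * g j else 0)) + (\<Sum>j<n. (if i - 1 = j \<and> i > 0 then c/4 * g j else 0))
     + (\<Sum>j<n. (if i + 1 = j then c/4 * g j else 0)) - (\<Sum>j<n. g j)"
    unfolding e by (simp add: sum.distrib sum_subtractf)
  also have "(\<Sum>j<n. (if i - 1 = j \<and> i > 0 then c/4 * g j else 0)) = c/4 * prv g i"
  proof (cases "i > 0")
    case True
    then show ?thesis using assms(1) by (simp add: prv_def sum.delta)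
  next
    case False
    then show ?thesis by (simp add: prv_def)
  qed
  also have "(\<Sum>j<n. (if i + 1 = j then c/4 * g j else 0)) = c/4 * g (i+1)"
    using assms by (simp add: sum.delta)
  finally show ?thesis using assms by (simp add: sum.delta)
qed

lemma shift_sum: "(\<Sum>k<Suc n. f (prv g k)) = f 0 + (\<Sum>k<n. f (g k))"
  unfolding prv_def by (simp add: sum.lessThan_Suc_shift del: sum.lessThan_Suc)

lemma dsum: fixes w :: "nat \<Rightarrow> real" and A :: "nat set" assumes "finite A"
  shows "(\<Sum>j\<in>A. \<Sum>k\<in>A. (w j - w k)^2) = 2 * card A * (\<Sum>k\<in>A. (w k)^2) - 2 * (\<Sum>k\<in>A. w k)^2"
proof -
  have "(\<Sum>j\<in>A. \<Sum>k\<in>A. (w j - w k)^2) = (\<Sum>j\<in>A. \<Sum>k\<in>A. (w j)^2 + (w k)^2 - 2 * (w j * w k))"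
    by (simp add: power2_diff mult.assoc)
  also have "\<dots> = (\<Sum>j\<in>A. \<Sum>k\<in>A. (w j)^2) + (\<Sum>j\<in>A. \<Sum>k\<in>A. (w k)^2) - 2 * (\<Sum>j\<in>A. \<Sum>k\<in>A. w j * w k)"
    by (simp add: sum.distrib sum_subtractf sum_distrib_left)
  also have "(\<Sum>j\<in>A. \<Sum>k\<in>A. w j * w k) = (\<Sum>k\<in>A. w k) * (\<Sum>k\<in>A. w k)"
    by (simp add: sum_product)
  also have "(\<Sum>j\<in>A. \<Sum>k\<in>A. (w j)^2) = card A * (\<Sum>k\<in>A. (w k)^2)"
    by (simp add: sum_distrib_left)
  also have "(\<Sum>j\<in>A. \<Sum>k\<in>A. (w k)^2) = card A * (\<Sum>k\<in>A. (w k)^2)"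
    by simp
  finally show ?thesis by (simp add: power2_eq_square)
qed

lemma quad:
  assumes "\<forall>k\<ge>n. g k = 0"
  defines "w \<equiv> \<lambda>k. prv g k + g k"
  shows "(\<Sum>i<n. g i * (\<Sum>j<n. hh (real (Suc n)) i j * g j)) = (1/8) * (\<Sum>j<Suc n. \<Sum>k<Suc n. (w j - w k)^2)"
proof -
  define c where "c = real (Suc n)"
  define S where "S = (\<Sum>j<n. g j)"
  have gn: "g n = 0" using assms by auto
  have "(\<Sum>i<n. g i * (\<Sum>j<n. hh c i j * g j)) = (\<Sum>i<n. g i * (c/2 * g i + c/4 * prv g i + c/4 * g (i+1) - S))"
    using row_sum[OF _ assms(1)] S_def by simp
  also have "\<dots> = c/2 * (\<Sum>i<n. (g i)^2) + c/4 * (\<Sum>i<n. g i * prv g i) + c/4 * (\<Sum>i<n. g i * g (i+1)) - S^2"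
    by (simp add: algebra_simps sum.distrib sum_subtractf sum_distrib_left power2_eq_square S_def sum_distrib_right)
  also have "(\<Sum>i<n. g i * g (i+1)) = (\<Sum>i<n. g i * prv g i)"
  proof (cases n)
    case 0 then show ?thesis by simp
  next
    case (Suc m)
    have "(\<Sum>i<Suc m. g i * prv g i) = (\<Sum>i<m. g (Suc i) * g i)"
      unfolding prv_def by (simp add: sum.lessThan_Suc_shift del: sum.lessThan_Suc)
    moreover have "(\<Sum>i<Suc m. g i * g (i+1)) = (\<Sum>i<m. g i * g (Suc i))"
      using gn Suc by simp
    ultimately show ?thesis using Suc by (simp add: mult.commute)
  qed
  finally have L: "(\<Sum>i<n. g i * (\<Sum>j<n. hh c i j * g j)) = c/2 * (\<Sum>i<n. (g i)^2) + c/2 * (\<Sum>i<n. g i * prv g i) - S^2"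
    by simp
  have Q: "(\<Sum>k<Suc n. (w k)^2) = 2 * (\<Sum>i<n. (g i)^2) + 2 * (\<Sum>i<n. g i * prv g i)"
  proof -
    have "(\<Sum>k<Suc n. (w k)^2) = (\<Sum>k<Suc n. (prv g k)^2) + (\<Sum>k<Suc n. (g k)^2) + 2 * (\<Sum>k<Suc n. g k * prv g k)"
      unfolding w_def by (simp add: power2_sum sum.distrib sum_distrib_left algebra_simps)
    also have "(\<Sum>k<Suc n. (prv g k)^2) = (\<Sum>i<n. (g i)^2)"
      using shift_sum[where f="\<lambda>x. x^2" and n=n and g=g] by simp
    finally show ?thesis using gn by simp
  qed
  have W: "(\<Sum>k<Suc n. w k) = 2 * S"
  proof -
    have "(\<Sum>k<Suc n. w k) = (\<Sum>k<Suc n. prv g k) + (\<Sum>k<Suc n. g k)"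
      unfolding w_def by (simp add: sum.distrib)
    also have "(\<Sum>k<Suc n. prv g k) = S" using shift_sum[where f="\<lambda>x. x" and n=n and g=g] S_def by simp
    finally show ?thesis using gn S_def by simp
  qed
  have X: "(\<Sum>j<Suc n. \<Sum>k<Suc n. (w j - w k)^2) = 2 * c * (\<Sum>k<Suc n. (w k)^2) - 2 * (\<Sum>k<Suc n. w k)^2"
    using dsum[of "{..<Suc n}" w] c_def by simp
  show ?thesis unfolding c_def[symmetric] X L Q W by (simp add: algebra_simps power2_eq_square)
qed

lemma H_carrier: "Hmat N \<in> carrier_mat (N-1) (N-1)"
  unfolding Hmat_def Bmat_def Lap_def by auto

lemma H_entry: assumes "i < N-1" "j < N-1" shows "Hmat N $$ (i,j) = hh (real N) i j"
  using assms unfolding Hmat_def Bmat_def Lap_def hh_def by auto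

lemma H_quad: assumes "v \<in> carrier_vec (N-1)"
  shows "v \<bullet> (Hmat N *\<^sub>v v) = (\<Sum>i<N-1. (\<lambda>k. if k < N-1 then v$k else 0) i *
     (\<Sum>j<N-1. hh (real N) i j * (\<lambda>k. if k < N-1 then v$k else 0) j))"
proof -
  have c: "Hmat N \<in> carrier_mat (N-1) (N-1)" by (rule H_carrier)
  have "v \<bullet> (Hmat N *\<^sub>v v) = (\<Sum>i<N-1. v$i * (\<Sum>j<N-1. Hmat N $$ (i,j) * v$j))"
    using c assms unfolding scalar_prod_def by (auto simp: lessThan_atLeast0 scalar_prod_def intro!: sum.cong)
  also have "\<dots> = (\<Sum>i<N-1. v$i * (\<Sum>j<N-1. hh (real N) i j * v$j))"
    using H_entry by (intro sum.cong refl arg_cong2[where f="(*)"]) auto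
  finally show ?thesis by simp
qed

lemma alt_zero:
  assumes "even n" "\<forall>k\<ge>n. g k = 0" "\<forall>j<Suc n. prv g j + g j = a"
  shows "\<forall>k<n. g k = 0"
proof -
  have A: "k < n \<Longrightarrow> g k = (if even k then a else 0)" for k
  proof (induction k)
    case 0 then show ?case using assms(3) by (auto simp: prv_def)
  next
    case (Suc k)
    then have "prv g (Suc k) + g (Suc k) = a" using assms(3) by auto
    then show ?case using Suc by (auto simp: prv_def)
  qed
  show ?thesis
  proof (cases n)
    case 0 then show ?thesis by simp
  next
    case (Suc m)
    have "prv g n + g n = a" using assms(3) by auto
    then have "g m = a" using Suc assms(2) by (auto simp: prv_def)
    moreover have "odd m" using Suc assms(1) by auto
    ultimately have "a = 0" using A[of m] Suc by auto
    then show ?thesis using A by auto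
  qed
qed

lemma count_even: "(\<Sum>i<Suc (2*m). (if even i then 1 else 0::real)) = real m + 1"
  by (induction m) auto

lemma H_mulvec: assumes "v \<in> carrier_vec (N-1)" "i < N-1"
  shows "(Hmat N *\<^sub>v v) $ i = (\<Sum>j<N-1. hh (real N) i j * (\<lambda>k. if k < N-1 then v$k else 0) j)"
proof -
  have c: "Hmat N \<in> carrier_mat (N-1) (N-1)" by (rule H_carrier)
  have "(Hmat N *\<^sub>v v) $ i = (\<Sum>j<N-1. Hmat N $$ (i,j) * v$j)"
    using c assms by (auto simp: lessThan_atLeast0 scalar_prod_def intro!: sum.cong)
  also have "\<dots> = (\<Sum>j<N-1. hh (real N) i j * v$j)"
    using H_entry assms by (intro sum.cong refl arg_cong2[where f="(*)"]) auto
  finally show ?thesis by simp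
qed

lemma main:
  fixes N n :: nat
  assumes Nn: "N = Suc n"
  shows "psd_mat (Hmat N) \<and> (even N \<longrightarrow> det (Hmat N) = 0) \<and> (odd N \<longrightarrow> pd_mat (Hmat N))"
proof -
  have c: "Hmat N \<in> carrier_mat n n" using H_carrier[of N] Nn by simp
  have dr: "dim_row (Hmat N) = n" using c by simp
  have key: "v \<bullet> (Hmat N *\<^sub>v v) = (1/8) * (\<Sum>j<Suc n. \<Sum>k<Suc n.
       (prv (\<lambda>k. if k < n then v$k else 0) j + (\<lambda>k. if k < n then v$k else 0) j
       - (prv (\<lambda>k. if k < n then v$k else 0) k + (\<lambda>k. if k < n then v$k else 0) k))^2)"
    if "v \<in> carrier_vec n" for v
    using H_quad[of v "Suc n"] quad[of n "\<lambda>k. if k < n then v$k else 0"] that unfolding Nn by simp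
  have psd: "psd_mat (Hmat N)"
    unfolding psd_mat_def dr
  proof (intro conjI c ballI)
    fix v :: "real vec" assume v: "v \<in> carrier_vec n"
    show "v \<bullet> (Hmat N *\<^sub>v v) \<ge> 0"
      unfolding key[OF v] by (intro mult_nonneg_nonneg sum_nonneg) auto
  qed
  have pd: "pd_mat (Hmat N)" if "odd N"
    unfolding pd_mat_def dr
  proof (intro conjI c ballI impI)
    fix v :: "real vec" assume v: "v \<in> carrier_vec n" "v \<noteq> 0\<^sub>v n"
    define g where "g = (\<lambda>k. if k < n then v$k else 0)"
    define w where "w = (\<lambda>k. prv g k + g k)"
    have ge: "v \<bullet> (Hmat N *\<^sub>v v) = (1/8) * (\<Sum>j<Suc n. \<Sum>k<Suc n. (w j - w k)^2)"
      using key[OF v(1)] unfolding g_def w_def by simp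
    show "v \<bullet> (Hmat N *\<^sub>v v) > 0"
    proof (rule ccontr)
      assume neg: "\<not> ?thesis"
      have nn: "\<forall>j. 0 \<le> (\<Sum>k<Suc n. (w j - w k)^2)" by (intro allI sum_nonneg) simp
      have "(\<Sum>j<Suc n. \<Sum>k<Suc n. (w j - w k)^2) = 0"
      proof -
        have "0 \<le> (\<Sum>j<Suc n. \<Sum>k<Suc n. (w j - w k)^2)" using nn by (intro sum_nonneg) auto
        then show ?thesis using ge neg by linarith
      qed
      then have "\<forall>j\<in>{..<Suc n}. (\<Sum>k<Suc n. (w j - w k)^2) = 0"
        using sum_nonneg_eq_0_iff[of "{..<Suc n}" "\<lambda>j. \<Sum>k<Suc n. (w j - w k)^2"] nn by blast
      then have "\<forall>j<Suc n. w j = w 0"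
      proof (intro allI impI)
        fix j assume j: "j < Suc n" and H: "\<forall>j\<in>{..<Suc n}. (\<Sum>k<Suc n. (w j - w k)^2) = 0"
        have "(\<Sum>k<Suc n. (w j - w k)^2) = 0" using H j by blast
        then have "\<forall>k\<in>{..<Suc n}. (w j - w k)^2 = 0"
          using sum_nonneg_eq_0_iff[of "{..<Suc n}" "\<lambda>k. (w j - w k)^2"] by simp
        then have "(w j - w 0)^2 = 0" by blast
        then show "w j = w 0" by simp
      qed
      then have "\<forall>j<Suc n. prv g j + g j = w 0"
        unfolding w_def by metis
      moreover have "even n" using that Nn by auto
      moreover have "\<forall>k\<ge>n. g k = 0" unfolding g_def by auto
      ultimately have "\<forall>k<n. g k = 0" using alt_zero by blast
      then have "v = 0\<^sub>v n" using v(1) unfolding g_def by (auto intro!: eq_vecI)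
      then show False using v(2) by simp
    qed
  qed
  have sing: "det (Hmat N) = 0" if "even N"
  proof -
    have "odd n" using that Nn by simp
    then obtain m where m: "n = Suc (2*m)" using oddE by fastforce
    have rN: "real N = 2 * real m + 2" using Nn m by simp
    define u where "u = vec n (\<lambda>i. if even i then 1 else (0::real))"
    define g where "g = (\<lambda>k. if k < n then u$k else 0)"
    have u: "u \<in> carrier_vec n" unfolding u_def by simp
    have S: "(\<Sum>j<n. g j) = real m + 1"
      using count_even[of m] m unfolding g_def u_def by simp
    have "Hmat N *\<^sub>v u = 0\<^sub>v n"
    proof (rule eq_vecI)
      show "dim_vec (Hmat N *\<^sub>v u) = dim_vec (0\<^sub>v n)" using c by simp
      fix i assume "i < dim_vec (0\<^sub>v n)"
      then have i: "i < n" by simp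
      have "(Hmat N *\<^sub>v u) $ i = (\<Sum>j<n. hh (real N) i j * g j)"
        using H_mulvec[of u "Suc n" i] u i unfolding g_def Nn by simp
      also have "\<dots> = real N/2 * g i + real N/4 * prv g i + real N/4 * g (i+1) - (\<Sum>j<n. g j)"
        by (rule row_sum) (use i in \<open>auto simp: g_def\<close>)
      also have "\<dots> = 0"
      proof (cases "even i")
        case True
        have "g i = 1" using True i unfolding g_def u_def by simp
        moreover have "prv g i = 0" using True i unfolding g_def u_def prv_def by auto
        moreover have "g (i+1) = 0" using True i unfolding g_def u_def by simp
        ultimately show ?thesis using S rN by simp
      next
        case False
        have "i + 1 \<noteq> n" using False m by auto
        then have i1: "i + 1 < n" using i by simp
        have "g i = 0" using False i unfolding g_def u_def by simp
        moreover have "prv g i = 1" using False i unfolding g_def u_def prv_def by (cases i) auto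
        moreover have "g (i+1) = 1" using False i1 unfolding g_def u_def by simp
        ultimately show ?thesis using S rN by simp
      qed
      finally show "(Hmat N *\<^sub>v u) $ i = 0\<^sub>v n $ i" using i by simp
    qed
    moreover have "u \<noteq> 0\<^sub>v n"
    proof
      assume "u = 0\<^sub>v n"
      then have "u $ 0 = 0" using m by simp
      then show False using m unfolding u_def by simp
    qed
    ultimately show ?thesis using det_0_iff_vec_prod_zero[OF c] u by blast
  qed
  show ?thesis using psd pd sing by blast
qed

theorem lemma4p4:
  fixes N :: nat
  assumes "N \<ge> 2"
  shows "psd_mat (Hmat N) \<and> (even N \<longrightarrow> det (Hmat N) = 0) \<and> (odd N \<longrightarrow> pd_mat (Hmat N))"
  using main[of N "N - 1"] assms by simp

end
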